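(* Let $L\geq 2$ and consider the alternating minimization algorithm described below for minimizing $S$. Suppose $\sigma\in C^2(\mathbb{R})$ with $|\sigma|\leq M_0$, $|\sigma'|\leq M_1$, $|\sigma''|\leq M_2$ on $\mathbb{R}$ for some $M_0,M_1,M_2>0$, let $R>0$, and assume all parameters $\{W_l\}_{l=1}^L,\{b_l,c_l\}_{l=1}^{L-1}$ produced by the algorithm have Frobenius norm at most $R$. Let $C_1,\dots,C_L>0$ be constants such that, at every update step, the partial gradient $\nabla_{c_l}S$ (as a function of $c_l$ with all other parameters fixed at their current values) is $C_l$-Lipschitz on $\mathbb{R}^{M\times N}$ for $l=1,\dots,L-1$, and $\nabla_{W_L}S$ (as a function of $W_L$, others fixed) is $C_L$-Lipschitz on $\{W_L:\|W_L\|_{\mathrm F}\le R\}$, all with respect to the Frobenius norm. If the learning rates satisfy $\tau_l^k\in(0,2/C_l]$ for all $l$ and $k$, then $$S(\Theta^{k+1})\leq S(\Theta^k)\qquad\text{for all }k\geq 0,$$ where $\Theta^k=\{W_L^k,W_l^k,b_l^k,c_l^k\}_{l=1}^{L-1}$ denotes the parameters after the $k$-th iteration.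
   Context: Data: $X\in\mathbb{R}^{d\times N}$, $A\in\mathbb{R}^{J\times N}$ with one-hot columns, $J\ge2$. For $\boldsymbol z\in\mathbb{R}^J$, one-hot $\boldsymbol\alpha$: $\ell(\boldsymbol z,\boldsymbol\alpha)=-\sum_j\alpha_j\ln\big(e^{z_j}/\sum_k e^{z_k}\big)$; $\mathcal{L}_{\mathrm{vec}}(Z,A)=[\ell(\boldsymbol z_n,\boldsymbol\alpha_n)]_{n=1}^N$ for $Z=[\boldsymbol z_1\cdots\boldsymbol z_N]$. Parameters $W_1\in\mathbb{R}^{M\times d}$, $W_2,\dots,W_{L-1}\in\mathbb{R}^{M\times M}$, $W_L\in\mathbb{R}^{J\times M}$, $b_l\in\mathbb{R}^M$, $c_l\in\mathbb{R}^{M\times N}$; $\sigma$ entrywise; $\mathbf 1\in\mathbb{R}^N$ all-ones. $\omega_l=\prod_{j=l+1}^L\|W_j\|_{\mathrm F}^2$ and $S=\|\mathcal{L}_{\mathrm{vec}}(W_L\sigma(c_{L-1}),A)\|_2^2+\sum_{l=2}^{L-1}\omega_l\|W_l\sigma(c_{l-1})+b_l\mathbf 1^\top-c_l\|_{\mathrm F}^2+\omega_1\|W_1X+b_1\mathbf 1^\top-c_1\|_{\mathrm F}^2$. Auxiliary quantities (computed from current parameter values): $V_1=X$, $V_l=\sigma(c_{l-1})$ for $2\le l\le L-1$; $B_l=c_l-b_l\mathbf 1^\top$; $\lambda_1=0$, $\lambda_2=\|W_1V_1-B_1\|_{\mathrm F}^2$, and for $3\le l\le L-1$, $\lambda_l=\sum_{i=1}^{l-2}\big(\prod_{j=i+1}^{l-1}\|W_j\|_{\mathrm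 F}^2\big)\|W_iV_i-B_i\|_{\mathrm F}^2+\|W_{l-1}V_{l-1}-B_{l-1}\|_{\mathrm F}^2$. Algorithm: starting from an initialization, iteration $k=0,1,\dots$ performs in order: (1) $W_L\leftarrow W_L-\tau_L^k\nabla_{W_L}S$; (2) for $l=L-1,L-2,\dots,1$: $c_l\leftarrow c_l-\tau_l^k\nabla_{c_l}S$; then $W_l\leftarrow$ a least-squares solution of $W_l[V_l~~\sqrt{\lambda_l}I]=[B_l~~O]$ (i.e. a minimizer of $\|W_lV_l-B_l\|_{\mathrm F}^2+\lambda_l\|W_l\|_{\mathrm F}^2$); then $b_l\leftarrow$ the least-squares solution of $b_l\mathbf 1^\top=c_l-W_lV_l$ (the mean of the columns of $c_l-W_lV_l$). Each step uses the most recently updated values of all parameters; partial gradients are with respect to the Frobenius inner product. *)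

theory Defs
  imports "HOL-Analysis.Analysis"
begin

text \<open>Dimensions are type-indexed: 'd = input dimension d, 'n = number of samples N,
  'm = width M, 'j = number of classes J.  A matrix in R^{p x q} is "real^'q^'p"
  (rows indexed by 'p).  The norm on such matrices is the Frobenius norm and
  the inner product is the Frobenius inner product.\<close>

record ('d::finite, 'n::finite, 'm::finite, 'j::finite) params =
  W1 :: "real^'d^'m"
  Wm :: "nat \<Rightarrow> real^'m^'m"    \<comment> \<open>W_l, M x M, used for 2 <= l <= L-1\<close>
  WL :: "real^'m^'j"
  bb :: "nat \<Rightarrow> real^'m"        \<comment> \<open>b_l, used for 1 <= l <= L-1\<close>
  cc :: "nat \<Rightarrow> real^'n^'m"     \<comment> \<open>c_l, used for 1 <= l <= L-1\<close>

definition grad :: "('a::real_inner \<Rightarrow> real) \<Rightarrow> 'a \<Rightarrow> 'a" where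
  "grad f x = (THE D. GDERIV f x :> D)"

definition act :: "(real \<Rightarrow> real) \<Rightarrow> real^'n^'m \<Rightarrow> real^'n^'m" where
  "act \<sigma> Z = (\<chi> i k. \<sigma> (Z $ i $ k))"

definition bias1 :: "real^'m \<Rightarrow> real^'n^'m" where
  "bias1 v = (\<chi> i k. v $ i)"

definition onehot_cols :: "real^'n^'j \<Rightarrow> bool" where
  "onehot_cols A \<longleftrightarrow> (\<forall>k. \<exists>j. A $ j $ k = 1 \<and> (\<forall>j'. j' \<noteq> j \<longrightarrow> A $ j' $ k = 0))"

definition xent :: "real^'j \<Rightarrow> real^'j \<Rightarrow> real" where
  "xent z \<alpha> = - (\<Sum>j\<in>UNIV. \<alpha> $ j * ln (exp (z $ j) / (\<Sum>k\<in>UNIV. exp (z $ k))))"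

definition Lvec :: "real^'n^'j \<Rightarrow> real^'n^'j \<Rightarrow> real^'n" where
  "Lvec Z A = (\<chi> k. xent (column k Z) (column k A))"

definition Wnorm :: "nat \<Rightarrow> ('d::finite,'n::finite,'m::finite,'j::finite,'z) params_scheme \<Rightarrow> nat \<Rightarrow> real" where
  "Wnorm L p j = (if j = 1 then norm (W1 p) else if j = L then norm (WL p) else norm (Wm p j))"

definition omega :: "nat \<Rightarrow> ('d::finite,'n::finite,'m::finite,'j::finite,'z) params_scheme \<Rightarrow> nat \<Rightarrow> real" where
  "omega L p l = (\<Prod>j\<in>{l+1..L}. (Wnorm L p j)\<^sup>2)"

definition Sobj :: "(real \<Rightarrow> real) \<Rightarrow> real^'n^'d \<Rightarrow> real^'n^'j \<Rightarrow> nat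
    \<Rightarrow> ('d::finite,'n::finite,'m::finite,'j::finite) params \<Rightarrow> real" where
  "Sobj \<sigma> X A L p =
     (norm (Lvec (WL p ** act \<sigma> (cc p (L - 1))) A))\<^sup>2
     + (\<Sum>l\<in>{2..L-1}. omega L p l * (norm (Wm p l ** act \<sigma> (cc p (l - 1)) + bias1 (bb p l) - cc p l))\<^sup>2)
     + omega L p 1 * (norm (W1 p ** X + bias1 (bb p 1) - cc p 1))\<^sup>2"

text \<open>Residual ||W_i V_i - B_i||_F^2 for 1 <= i <= L-1, with V_1 = X, V_i = sigma(c_{i-1}),
  B_i = c_i - b_i 1^T.\<close>
definition resid :: "(real \<Rightarrow> real) \<Rightarrow> real^'n^'d \<Rightarrow> ('d::finite,'n::finite,'m::finite,'j::finite) params \<Rightarrow> nat \<Rightarrow> real" where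
  "resid \<sigma> X p i =
     (if i = 1 then (norm (W1 p ** X - (cc p 1 - bias1 (bb p 1))))\<^sup>2
      else (norm (Wm p i ** act \<sigma> (cc p (i - 1)) - (cc p i - bias1 (bb p i))))\<^sup>2)"

text \<open>The single formula
  lambda_l = sum_{i=1}^{l-1} (prod_{j=i+1}^{l-1} ||W_j||_F^2) ||W_i V_i - B_i||_F^2
  gives lambda_1 = 0, lambda_2 = ||W_1 V_1 - B_1||^2, and for l >= 3 exactly the paper's
  formula (the term i = l-1 has an empty product).\<close>
definition lam :: "(real \<Rightarrow> real) \<Rightarrow> real^'n^'d \<Rightarrow> nat \<Rightarrow> ('d::finite,'n::finite,'m::finite,'j::finite) params \<Rightarrow> nat \<Rightarrow> real" where
  "lam \<sigma> X L p l = (\<Sum>i\<in>{1..l-1}. (\<Prod>j\<in>{i+1..l-1}. (Wnorm L p j)\<^sup>2) * resid \<sigma> X p i)"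

text \<open>W is a least-squares solution of W [V  sqrt(lambda) I] = [B  O], i.e. a minimizer of
  ||W V - B||_F^2 + lambda ||W||_F^2.\<close>
definition is_ls :: "real^'a^'b \<Rightarrow> real^'n^'a \<Rightarrow> real^'n^'b \<Rightarrow> real \<Rightarrow> bool" where
  "is_ls W V B lm \<longleftrightarrow> (\<forall>W'. (norm (W ** V - B))\<^sup>2 + lm * (norm W)\<^sup>2 \<le> (norm (W' ** V - B))\<^sup>2 + lm * (norm W')\<^sup>2)"

text \<open>Mean of the columns of a matrix (least-squares solution of b 1^T = Z).\<close>
definition colmean :: "real^'n^'m \<Rightarrow> real^'m" where
  "colmean Z = (\<chi> i. (\<Sum>k\<in>UNIV. Z $ i $ k) / real CARD('n))"

definition WL_step :: "(real \<Rightarrow> real) \<Rightarrow> real^'n^'d \<Rightarrow> real^'n^'j \<Rightarrow> nat \<Rightarrow> real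
    \<Rightarrow> ('d::finite,'n::finite,'m::finite,'j::finite) params \<Rightarrow> ('d,'n,'m,'j) params" where
  "WL_step \<sigma> X A L \<tau> p =
     p\<lparr>WL := WL p - \<tau> *\<^sub>R grad (\<lambda>w. Sobj \<sigma> X A L (p\<lparr>WL := w\<rparr>)) (WL p)\<rparr>"

text \<open>Step (2) for layer l (1 <= l <= L-1): gradient step on c_l, then a least-squares W_l,
  then b_l := column mean of c_l - W_l V_l.  q is a possible result (the least-squares
  solution W_l need not be unique).\<close>
definition layer_step :: "(real \<Rightarrow> real) \<Rightarrow> real^'n^'d \<Rightarrow> real^'n^'j \<Rightarrow> nat \<Rightarrow> nat \<Rightarrow> real
    \<Rightarrow> ('d::finite,'n::finite,'m::finite,'j::finite) params \<Rightarrow> ('d,'n,'m,'j) params \<Rightarrow> bool" where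
  "layer_step \<sigma> X A L l \<tau> p q \<longleftrightarrow>
     (let p1 = p\<lparr>cc := (cc p)(l := cc p l - \<tau> *\<^sub>R
                    grad (\<lambda>v. Sobj \<sigma> X A L (p\<lparr>cc := (cc p)(l := v)\<rparr>)) (cc p l))\<rparr>
      in if l = 1 then
           (\<exists>W. is_ls W X (cc p1 1 - bias1 (bb p1 1)) (lam \<sigma> X L p1 1) \<and>
                q = p1\<lparr>W1 := W, bb := (bb p1)(1 := colmean (cc p1 1 - W ** X))\<rparr>)
         else
           (\<exists>W. is_ls W (act \<sigma> (cc p1 (l - 1))) (cc p1 l - bias1 (bb p1 l)) (lam \<sigma> X L p1 l) \<and>
                q = p1\<lparr>Wm := (Wm p1)(l := W),
                       bb := (bb p1)(l := colmean (cc p1 l - W ** act \<sigma> (cc p1 (l - 1))))\<rparr>))"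

end

theory Submission
  imports Defs
begin


lemma diff_vec:
  fixes f :: "'a::euclidean_space \<Rightarrow> 'b::real_normed_vector^'k::finite"
  assumes "\<And>i. (\<lambda>x. f x $ i) differentiable (at x)"
  shows "f differentiable (at x)"
proof -
  from assms obtain D where D: "\<And>i. ((\<lambda>x. f x $ i) has_derivative D i) (at x)"
    unfolding differentiable_def by metis
  have Dl: "linear (D i)" for i using D[of i] has_derivative_linear by blast
  have lin: "linear (\<lambda>h. \<chi> i. D i h)"
  proof (rule linearI)
    fix a b show "(\<chi> i. D i (a + b)) = (\<chi> i. D i a) + (\<chi> i. D i b)"
      by (simp add: vec_eq_iff linear_add[OF Dl])
  next
    fix c a show "(\<chi> i. D i (c *\<^sub>R a)) = c *\<^sub>R (\<chi> i. D i a)"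
      by (simp add: vec_eq_iff linear_scale[OF Dl])
  qed
  have "(f has_derivative (\<lambda>h. \<chi> i. D i h)) (at x)"
    unfolding has_derivative_def
  proof
    show "bounded_linear (\<lambda>h. \<chi> i. D i h)" using lin linear_conv_bounded_linear by blast
    show "((\<lambda>y. (f y - f (Lim (at x) (\<lambda>x. x)) - (\<chi> i. D i (y - Lim (at x) (\<lambda>x. x)))) /\<^sub>R
             norm (y - Lim (at x) (\<lambda>x. x))) \<longlongrightarrow> 0) (at x)"
      apply (rule vec_tendstoI)
      using D[unfolded has_derivative_def] by simp
  qed
  then show ?thesis unfolding differentiable_def by blast
qed

lemma diff_nth[derivative_intros]:
  "f differentiable (at x) \<Longrightarrow> (\<lambda>x. f x $ i) differentiable (at x)"
  by (rule differentiable_compose[of "\<lambda>v. v $ i"])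
     (auto intro: bounded_linear_imp_differentiable bounded_linear_vec_nth)

lemma diff_if[derivative_intros]:
  "f differentiable F \<Longrightarrow> g differentiable F \<Longrightarrow> (\<lambda>x. if P then f x else g x) differentiable F"
  by (cases P) auto

lemma diff_normsq[derivative_intros]:
  fixes f :: "'a::real_normed_vector \<Rightarrow> 'b::real_inner"
  shows "f differentiable (at x) \<Longrightarrow> (\<lambda>x. (norm (f x))\<^sup>2) differentiable (at x)"
  unfolding power2_norm_eq_inner by simp

lemma diff_prod[derivative_intros]:
  fixes f :: "'i \<Rightarrow> 'a::real_normed_vector \<Rightarrow> real"
  assumes "finite A" "\<forall>a\<in>A. f a differentiable (at x)"
  shows "(\<lambda>x. \<Prod>a\<in>A. f a x) differentiable (at x)"
proof -
  from bchoice[OF assms(2)[unfolded differentiable_def]] obtain D where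
    "\<forall>a\<in>A. (f a has_derivative D a) (at x)" by blast
  then show ?thesis unfolding differentiable_def
    using has_derivative_prod[of A f D x UNIV] by blast
qed



lemma diff_sigma:
  assumes d1: "\<And>x. (\<sigma> has_real_derivative \<sigma>' x) (at x)"
    and f: "f differentiable (at x)"
  shows "(\<lambda>x. \<sigma> (f x)) differentiable (at x)"
  by (rule differentiable_compose[OF _ f]) (use d1 in \<open>auto simp: differentiable_def has_field_derivative_def\<close>)

lemma diff_ln[derivative_intros]:
  fixes f :: "'a::real_normed_vector \<Rightarrow> real"
  assumes f: "f differentiable (at x)" and pos: "f x > 0"
  shows "(\<lambda>x. ln (f x)) differentiable (at x)"
  by (rule differentiable_compose[OF _ f]) (use DERIV_ln[OF pos] in \<open>auto simp: differentiable_def has_field_derivative_def\<close>)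

lemma diff_exp[derivative_intros]:
  assumes f: "f differentiable (at x)"
  shows "(\<lambda>x. exp (f x :: real)) differentiable (at x)"
  by (rule differentiable_compose[OF _ f]) (use DERIV_exp in \<open>auto simp: differentiable_def has_field_derivative_def\<close>)

lemma sum_exp_pos[simp]: "(\<Sum>k\<in>(UNIV::'k::finite set). exp (g k :: real)) > 0"
  by (rule sum_pos) auto

lemma sum_exp_nz[simp]: "(\<Sum>k\<in>(UNIV::'k::finite set). exp (g k :: real)) \<noteq> 0"
  using sum_exp_pos[of g] by linarith

lemma bias1_nth[simp]: "bias1 v $ i $ k = v $ i" by (simp add: bias1_def)
lemma act_nth[simp]: "act \<sigma> Z $ i $ k = \<sigma> (Z $ i $ k)" by (simp add: act_def)
lemma mm_nth[simp]: "(P ** Q) $ i $ k = (\<Sum>m\<in>UNIV. P $ i $ m * Q $ m $ k)"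
  by (simp add: matrix_matrix_mult_def)

lemma diff_mm[derivative_intros]:
  fixes f :: "'a::euclidean_space \<Rightarrow> real^'m::finite^'j::finite"
    and g :: "'a::euclidean_space \<Rightarrow> real^'n::finite^'m::finite"
  assumes "f differentiable (at x)" "g differentiable (at x)"
  shows "(\<lambda>x. f x ** g x) differentiable (at x)"
  by (intro diff_vec) (use assms in \<open>auto intro!: derivative_intros\<close>)

lemma diff_act:
  fixes f :: "'a::euclidean_space \<Rightarrow> real^'n::finite^'m::finite"
  assumes d1: "\<And>x. (\<sigma> has_real_derivative \<sigma>' x) (at x)"
    and "f differentiable (at x)"
  shows "(\<lambda>x. act \<sigma> (f x)) differentiable (at x)"
  by (intro diff_vec) (use assms in \<open>auto intro!: derivative_intros diff_sigma[OF d1]\<close>)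

lemma diff_bias[derivative_intros]:
  fixes f :: "'a::euclidean_space \<Rightarrow> real^'m::finite"
  assumes "f differentiable (at x)"
  shows "(\<lambda>x. bias1 (f x) :: real^'n::finite^'m) differentiable (at x)"
  by (intro diff_vec) (use assms in \<open>auto intro!: derivative_intros\<close>)

lemma xent_alt: "xent z \<alpha> = - (\<Sum>j\<in>UNIV. \<alpha> $ j * (z $ j - ln (\<Sum>k\<in>UNIV. exp (z $ k))))"
  unfolding xent_def by (simp add: ln_div)

lemma diff_Lvec[derivative_intros]:
  fixes f :: "'a::euclidean_space \<Rightarrow> real^'n::finite^'j::finite"
  assumes "f differentiable (at x)"
  shows "(\<lambda>x. Lvec (f x) A) differentiable (at x)"
  unfolding Lvec_def xent_alt column_def
  by (intro diff_vec) (use assms in \<open>auto intro!: derivative_intros\<close>)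



lemma gderiv_unique:
  assumes "GDERIV f x :> D1" "GDERIV f x :> D2" shows "D1 = D2"
proof -
  have "(\<lambda>h. inner h D1) = (\<lambda>h. inner h D2)"
    using has_derivative_unique assms unfolding gderiv_def by blast
  then have "inner (D1 - D2) D1 = inner (D1 - D2) D2" by metis
  then have "inner (D1 - D2) (D1 - D2) = 0" by (simp add: inner_diff_right)
  then show ?thesis by simp
qed

lemma grad_works:
  fixes f :: "'a::euclidean_space \<Rightarrow> real"
  assumes "f differentiable (at x)" shows "GDERIV f x :> grad f x"
proof -
  obtain D' where D': "(f has_derivative D') (at x)" using assms unfolding differentiable_def by blast
  have lin: "linear D'" using D' has_derivative_linear by blast
  define g where "g = (\<Sum>b\<in>Basis. D' b *\<^sub>R b)"
  have "D' h = inner h g" for h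
  proof -
    have "D' h = D' (\<Sum>b\<in>Basis. (h \<bullet> b) *\<^sub>R b)" by (simp add: euclidean_representation)
    also have "\<dots> = (\<Sum>b\<in>Basis. (h \<bullet> b) * D' b)"
      by (simp add: linear_sum[OF lin] linear_scale[OF lin])
    also have "\<dots> = inner h g" unfolding g_def by (simp add: inner_sum_right mult.commute)
    finally show ?thesis .
  qed
  then have G: "GDERIV f x :> g" unfolding gderiv_def using D' by (metis (no_types) ext)
  have "grad f x = g" unfolding grad_def
    by (rule the_equality[of "\<lambda>D. GDERIV f x :> D" g, OF G]) (use G gderiv_unique in blast)
  then show ?thesis using G by simp
qed

lemma Wnorm_sq: "(Wnorm L p j)\<^sup>2 = (if j = 1 then (norm (W1 p))\<^sup>2 else if j = L then (norm (WL p))\<^sup>2 else (norm (Wm p j))\<^sup>2)"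
  by (simp add: Wnorm_def)

lemma diff_S_WL:
  assumes d1: "\<And>x. (\<sigma> has_real_derivative \<sigma>' x) (at x)"
  shows "(\<lambda>u. Sobj \<sigma> X A L (p\<lparr>WL := u\<rparr>)) differentiable (at u)"
  apply (simp add: Sobj_def omega_def Wnorm_sq)
  apply (intro diff_normsq diff_if derivative_intros diff_act[OF d1] ballI finite_atLeastAtMost)
  apply auto
  done

lemma diff_S_cc:
  assumes d1: "\<And>x. (\<sigma> has_real_derivative \<sigma>' x) (at x)"
  shows "(\<lambda>v. Sobj \<sigma> X A L (p\<lparr>cc := (cc p)(l := v)\<rparr>)) differentiable (at v)"
  apply (simp add: Sobj_def omega_def Wnorm_sq)
  apply (intro diff_normsq diff_if derivative_intros diff_act[OF d1] ballI finite_atLeastAtMost)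
  apply auto
  done



lemma descent:
  fixes f :: "'a::euclidean_space \<Rightarrow> real"
  assumes G: "\<And>z. z \<in> S \<Longrightarrow> GDERIV f z :> g z" and conv: "convex S"
    and lip: "lipschitz_on C S g" and xS: "x \<in> S" and yS: "y \<in> S"
  shows "f y \<le> f x + inner (g x) (y - x) + C / 2 * (norm (y - x))\<^sup>2"
proof -
  define d where "d = y - x"
  define \<phi> where "\<phi> t = f (x + t *\<^sub>R d) - t * inner (g x) d - C / 2 * t\<^sup>2 * (norm d)\<^sup>2" for t
  have zS: "x + t *\<^sub>R d \<in> S" if "0 \<le> t" "t \<le> 1" for t
  proof -
    have "x + t *\<^sub>R d = (1 - t) *\<^sub>R x + t *\<^sub>R y" by (simp add: d_def algebra_simps)
    then show ?thesis using convexD[OF conv xS yS, of "1 - t" t] that by simp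
  qed
  have "\<phi> 1 \<le> \<phi> 0"
  proof (rule DERIV_nonpos_imp_nonincreasing[of 0 1 \<phi>])
    fix t :: real assume t: "0 \<le> t" "t \<le> 1"
    define z where "z = x + t *\<^sub>R d"
    have z: "z \<in> S" using zS[OF t] by (simp add: z_def)
    have h1: "((\<lambda>t. x + t *\<^sub>R d) has_derivative (\<lambda>s. s *\<^sub>R d)) (at t)"
      by (auto intro!: derivative_eq_intros)
    have h2: "(f has_derivative (\<lambda>h. inner h (g z))) (at (x + t *\<^sub>R d))"
      using G[OF z] unfolding gderiv_def z_def .
    have "((\<lambda>t. f (x + t *\<^sub>R d)) has_derivative (\<lambda>s. inner (s *\<^sub>R d) (g z))) (at t)"
      using has_derivative_compose[OF h1 h2] by (simp add: o_def)
    then have h3: "((\<lambda>t. f (x + t *\<^sub>R d)) has_real_derivative inner d (g z)) (at t)"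
      by (rule has_derivative_imp_has_field_derivative) simp
    have D: "(\<phi> has_real_derivative (inner d (g z) - inner (g x) d - C * t * (norm d)\<^sup>2)) (at t)"
      unfolding \<phi>_def
      by (rule derivative_eq_intros h3 | simp)+
    have "inner d (g z) - inner (g x) d = inner (g z - g x) d" by (simp add: inner_diff_left inner_diff_right inner_commute)
    also have "\<dots> \<le> norm (g z - g x) * norm d" by (rule norm_cauchy_schwarz)
    also have "\<dots> \<le> C * norm (z - x) * norm d"
      by (rule mult_right_mono[OF lipschitz_on_normD[OF lip z xS]]) simp
    also have "\<dots> = C * t * (norm d)\<^sup>2" using t by (simp add: z_def power2_eq_square)
    finally have "inner d (g z) - inner (g x) d - C * t * (norm d)\<^sup>2 \<le> 0" by simp
    then show "\<exists>y. (\<phi> has_real_derivative y) (at t) \<and> y \<le> 0" using D by blast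
  qed simp
  then show ?thesis by (simp add: \<phi>_def d_def)
qed

lemma descent_step:
  fixes f :: "'a::euclidean_space \<Rightarrow> real"
  assumes G: "\<And>z. z \<in> S \<Longrightarrow> GDERIV f z :> g z" and conv: "convex S"
    and lip: "lipschitz_on C S g" and xS: "x \<in> S" and yS: "x - \<tau> *\<^sub>R g x \<in> S"
    and C: "C > 0" and t: "0 < \<tau>" "\<tau> \<le> 2 / C"
  shows "f (x - \<tau> *\<^sub>R g x) \<le> f x"
proof -
  have "f (x - \<tau> *\<^sub>R g x) \<le> f x + inner (g x) (- \<tau> *\<^sub>R g x) + C / 2 * (norm (- \<tau> *\<^sub>R g x))\<^sup>2"
    using descent[OF G conv lip xS yS] by simp
  also have "\<dots> = f x - \<tau> * (1 - C * \<tau> / 2) * (norm (g x))\<^sup>2"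
    using t by (simp add: power2_eq_square algebra_simps flip: power2_norm_eq_inner)
  also have "\<dots> \<le> f x"
  proof -
    have "C * \<tau> \<le> 2" using t C by (simp add: field_simps)
    then have "0 \<le> \<tau> * (1 - C * \<tau> / 2) * (norm (g x))\<^sup>2" using t by simp
    then show ?thesis by simp
  qed
  finally show ?thesis .
qed



definition T0 :: "(real \<Rightarrow> real) \<Rightarrow> real^'n^'j \<Rightarrow> nat \<Rightarrow> ('d::finite,'n::finite,'m::finite,'j::finite) params \<Rightarrow> real" where
  "T0 \<sigma> A L p = (norm (Lvec (WL p ** act \<sigma> (cc p (L - 1))) A))\<^sup>2"

lemma S_resid:
  assumes "L \<ge> 2"
  shows "Sobj \<sigma> X A L p = T0 \<sigma> A L p + (\<Sum>i\<in>{1..L-1}. omega L p i * resid \<sigma> X p i)"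
proof -
  have e: "{1..L-1} = insert 1 {2..L-1}" using assms by auto
  have "(\<Sum>i\<in>{2..L-1}. omega L p i * resid \<sigma> X p i) =
        (\<Sum>l\<in>{2..L-1}. omega L p l * (norm (Wm p l ** act \<sigma> (cc p (l - 1)) + bias1 (bb p l) - cc p l))\<^sup>2)"
    by (rule sum.cong) (auto simp: resid_def algebra_simps)
  then show ?thesis
    unfolding Sobj_def T0_def e by (simp add: resid_def algebra_simps)
qed

lemma omega_split:
  assumes "1 \<le> i" "i < l" "l \<le> L - 1"
  shows "omega L p i = (\<Prod>j\<in>{i+1..l-1}. (Wnorm L p j)\<^sup>2) * (Wnorm L p l)\<^sup>2 * omega L p l"
proof -
  have e: "{i+1..L} = {i+1..l-1} \<union> insert l {l+1..L}" using assms by auto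
  show ?thesis unfolding omega_def e
    by (subst prod.union_disjoint) (auto simp: algebra_simps)
qed

lemma S_decomp:
  assumes L: "L \<ge> 2" and l: "1 \<le> l" "l \<le> L - 1"
  shows "Sobj \<sigma> X A L p = T0 \<sigma> A L p + (\<Sum>i\<in>{l+1..L-1}. omega L p i * resid \<sigma> X p i)
          + omega L p l * (resid \<sigma> X p l + lam \<sigma> X L p l * (Wnorm L p l)\<^sup>2)"
proof -
  have e: "{1..L-1} = {1..l-1} \<union> insert l {l+1..L-1}" using l by auto
  have s: "(\<Sum>i\<in>{1..L-1}. omega L p i * resid \<sigma> X p i) =
      (\<Sum>i\<in>{1..l-1}. omega L p i * resid \<sigma> X p i) + omega L p l * resid \<sigma> X p l
      + (\<Sum>i\<in>{l+1..L-1}. omega L p i * resid \<sigma> X p i)"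
    unfolding e by (subst sum.union_disjoint) auto
  have "(\<Sum>i\<in>{1..l-1}. omega L p i * resid \<sigma> X p i) =
        (\<Sum>i\<in>{1..l-1}. omega L p l * (Wnorm L p l)\<^sup>2 * ((\<Prod>j\<in>{i+1..l-1}. (Wnorm L p j)\<^sup>2) * resid \<sigma> X p i))"
  proof (rule sum.cong[OF refl])
    fix i assume "i \<in> {1..l-1}"
    then have i: "1 \<le> i" "i < l" using l by auto
    show "omega L p i * resid \<sigma> X p i = omega L p l * (Wnorm L p l)\<^sup>2 * ((\<Prod>j\<in>{i+1..l-1}. (Wnorm L p j)\<^sup>2) * resid \<sigma> X p i)"
      by (simp add: omega_split[OF i l(2)])
  qed
  also have "\<dots> = omega L p l * (Wnorm L p l)\<^sup>2 * lam \<sigma> X L p l"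
    unfolding lam_def by (simp add: sum_distrib_left)
  finally show ?thesis using S_resid[OF L, of \<sigma> X A p] s by (simp add: algebra_simps)
qed

definition agree :: "nat \<Rightarrow> ('d::finite,'n::finite,'m::finite,'j::finite) params \<Rightarrow> ('d,'n,'m,'j) params \<Rightarrow> bool" where
  "agree l p q \<longleftrightarrow> WL q = WL p \<and> cc q = cc p \<and> (\<forall>j. j \<noteq> l \<longrightarrow> Wm q j = Wm p j)
     \<and> (l \<noteq> 1 \<longrightarrow> W1 q = W1 p) \<and> (\<forall>j. j \<noteq> l \<longrightarrow> bb q j = bb p j)"

lemma agree_S:
  assumes L: "L \<ge> 2" and l: "1 \<le> l" "l \<le> L - 1" and ag: "agree l p q"
  shows "Sobj \<sigma> X A L q - Sobj \<sigma> X A L p = omega L p l *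
     ((resid \<sigma> X q l + lam \<sigma> X L p l * (Wnorm L q l)\<^sup>2) - (resid \<sigma> X p l + lam \<sigma> X L p l * (Wnorm L p l)\<^sup>2))"
proof -
  have Wn: "Wnorm L q j = Wnorm L p j" if "j \<noteq> l" "j \<noteq> 1 \<or> l \<noteq> 1" for j
    using ag that unfolding agree_def Wnorm_def by auto
  have om: "omega L q i = omega L p i" if "i \<ge> l" for i
    unfolding omega_def by (rule prod.cong) (use that l in \<open>auto simp: Wn\<close>)
  have T: "T0 \<sigma> A L q = T0 \<sigma> A L p" using ag unfolding agree_def T0_def by simp
  have r: "resid \<sigma> X q i = resid \<sigma> X p i" if "i \<noteq> l" "i \<noteq> 1 \<or> l \<noteq> 1" for i
    using ag that unfolding agree_def resid_def by auto
  have lm: "lam \<sigma> X L q l = lam \<sigma> X L p l"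
    unfolding lam_def
  proof (rule sum.cong[OF refl])
    fix i assume "i \<in> {1..l-1}"
    then have i: "1 \<le> i" "i < l" using l by auto
    have "(\<Prod>j\<in>{i+1..l-1}. (Wnorm L q j)\<^sup>2) = (\<Prod>j\<in>{i+1..l-1}. (Wnorm L p j)\<^sup>2)"
      by (rule prod.cong) (use i in \<open>auto simp: Wn\<close>)
    then show "(\<Prod>j\<in>{i+1..l-1}. (Wnorm L q j)\<^sup>2) * resid \<sigma> X q i = (\<Prod>j\<in>{i+1..l-1}. (Wnorm L p j)\<^sup>2) * resid \<sigma> X p i"
      using i by (simp add: r)
  qed
  have sm: "(\<Sum>i\<in>{l+1..L-1}. omega L q i * resid \<sigma> X q i) = (\<Sum>i\<in>{l+1..L-1}. omega L p i * resid \<sigma> X p i)"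
    by (rule sum.cong) (use l in \<open>auto simp: om r\<close>)
  show ?thesis
    unfolding S_decomp[OF L l, of \<sigma> X A q] S_decomp[OF L l, of \<sigma> X A p] T sm lm om[OF order_refl]
    by (simp add: algebra_simps)
qed

lemma omega_nonneg: "omega L p l \<ge> 0"
  unfolding omega_def by (rule prod_nonneg) simp

lemma agree_le:
  assumes L: "L \<ge> 2" and l: "1 \<le> l" "l \<le> L - 1" and ag: "agree l p q"
    and le: "resid \<sigma> X q l + lam \<sigma> X L p l * (Wnorm L q l)\<^sup>2 \<le> resid \<sigma> X p l + lam \<sigma> X L p l * (Wnorm L p l)\<^sup>2"
  shows "Sobj \<sigma> X A L q \<le> Sobj \<sigma> X A L p"
proof -
  have "omega L p l * ((resid \<sigma> X q l + lam \<sigma> X L p l * (Wnorm L q l)\<^sup>2) - (resid \<sigma> X p l + lam \<sigma> X L p l * (Wnorm L p l)\<^sup>2)) \<le> 0"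
    using le omega_nonneg[of L p l] by (simp add: mult_nonneg_nonpos)
  then show ?thesis using agree_S[OF L l ag, of \<sigma> X A] by simp
qed



lemma normsq_vec: "(norm (x::'a::real_normed_vector^'n::finite))\<^sup>2 = (\<Sum>i\<in>UNIV. (norm (x $ i))\<^sup>2)"
  unfolding norm_vec_def L2_set_def by (simp add: sum_nonneg)

lemma normsq_mat: "(norm (M::real^'n::finite^'m::finite))\<^sup>2 = (\<Sum>i\<in>UNIV. \<Sum>k\<in>UNIV. (M $ i $ k)\<^sup>2)"
  unfolding normsq_vec by simp

lemma mean_min:
  fixes y :: "'k \<Rightarrow> real"
  assumes K: "finite K" "K \<noteq> {}"
  shows "(\<Sum>k\<in>K. ((\<Sum>j\<in>K. y j) / real (card K) - y k)\<^sup>2) \<le> (\<Sum>k\<in>K. (b - y k)\<^sup>2)"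
proof -
  define m where "m = (\<Sum>j\<in>K. y j) / real (card K)"
  have cK: "real (card K) > 0" using K by (simp add: card_gt_0_iff)
  have s0: "(\<Sum>k\<in>K. (m - y k)) = 0"
    using cK by (simp add: sum_subtractf m_def)
  have "(\<Sum>k\<in>K. (b - y k)\<^sup>2) = (\<Sum>k\<in>K. (m - y k)\<^sup>2 + 2 * (b - m) * (m - y k) + (b - m)\<^sup>2)"
    by (rule sum.cong) (auto simp: power2_eq_square algebra_simps)
  also have "\<dots> = (\<Sum>k\<in>K. (m - y k)\<^sup>2) + 2 * (b - m) * (\<Sum>k\<in>K. (m - y k)) + real (card K) * (b - m)\<^sup>2"
    by (simp add: sum.distrib sum_distrib_left)
  finally show ?thesis using s0 by (simp add: m_def)
qed

lemma colmean_le: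
  fixes Z c :: "real^'n::finite^'m::finite"
  shows "(norm (Z - (c - bias1 (colmean (c - Z)))))\<^sup>2 \<le> (norm (Z - (c - bias1 b)))\<^sup>2"
  unfolding normsq_mat
proof (rule sum_mono)
  fix i
  have "(\<Sum>k\<in>UNIV. ((\<Sum>j\<in>UNIV. c $ i $ j - Z $ i $ j) / real (card (UNIV::'n set)) - (c $ i $ k - Z $ i $ k))\<^sup>2)
        \<le> (\<Sum>k\<in>UNIV. (b $ i - (c $ i $ k - Z $ i $ k))\<^sup>2)"
    by (rule mean_min) auto
  then show "(\<Sum>k\<in>UNIV. ((Z - (c - bias1 (colmean (c - Z)))) $ i $ k)\<^sup>2)
           \<le> (\<Sum>k\<in>UNIV. ((Z - (c - bias1 b)) $ i $ k)\<^sup>2)"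
    by (simp add: colmean_def algebra_simps)
qed

lemma layer_WL: "layer_step \<sigma> X A L l \<tau> p q \<Longrightarrow> WL q = WL p"
  unfolding layer_step_def Let_def by (auto split: if_splits)

lemma layer_dec:
  assumes d1: "\<And>x. (\<sigma> has_real_derivative \<sigma>' x) (at x)"
    and L: "L \<ge> 2" and l: "l \<in> {1..L-1}" and C: "C > 0" and t: "0 < \<tau>" "\<tau> \<le> 2 / C"
    and lip: "lipschitz_on C UNIV (\<lambda>v. grad (\<lambda>u. Sobj \<sigma> X A L (p\<lparr>cc := (cc p)(l := u)\<rparr>)) v)"
    and st: "layer_step \<sigma> X A L l \<tau> p q"
  shows "Sobj \<sigma> X A L q \<le> Sobj \<sigma> X A L p"
proof -
  define f where "f = (\<lambda>u. Sobj \<sigma> X A L (p\<lparr>cc := (cc p)(l := u)\<rparr>))"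
  define p1 where "p1 = p\<lparr>cc := (cc p)(l := cc p l - \<tau> *\<^sub>R grad f (cc p l))\<rparr>"
  have l1: "1 \<le> l" "l \<le> L - 1" using l by auto
  have "f (cc p l - \<tau> *\<^sub>R grad f (cc p l)) \<le> f (cc p l)"
  proof (rule descent_step[where S=UNIV and C=C])
    show "GDERIV f z :> grad f z" for z unfolding f_def by (rule grad_works[OF diff_S_cc[OF d1]])
    show "lipschitz_on C UNIV (grad f)" using lip unfolding f_def by simp
  qed (use C t in auto)
  then have S1: "Sobj \<sigma> X A L p1 \<le> Sobj \<sigma> X A L p" by (simp add: f_def p1_def)
  have q: "(\<exists>W. is_ls W X (cc p1 1 - bias1 (bb p1 1)) (lam \<sigma> X L p1 1) \<and>
                q = p1\<lparr>W1 := W, bb := (bb p1)(1 := colmean (cc p1 1 - W ** X))\<rparr>)" if "l = 1"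
    using st that unfolding layer_step_def Let_def p1_def f_def by simp
  have q': "(\<exists>W. is_ls W (act \<sigma> (cc p1 (l - 1))) (cc p1 l - bias1 (bb p1 l)) (lam \<sigma> X L p1 l) \<and>
                q = p1\<lparr>Wm := (Wm p1)(l := W),
                       bb := (bb p1)(l := colmean (cc p1 l - W ** act \<sigma> (cc p1 (l - 1))))\<rparr>)" if "l \<noteq> 1"
    using st that unfolding layer_step_def Let_def p1_def f_def by simp
  show ?thesis
  proof (cases "l = 1")
    case True
    then obtain W where W: "is_ls W X (cc p1 1 - bias1 (bb p1 1)) (lam \<sigma> X L p1 1)"
      and qd: "q = p1\<lparr>W1 := W, bb := (bb p1)(1 := colmean (cc p1 1 - W ** X))\<rparr>" using q by blast
    define p2 where "p2 = p1\<lparr>W1 := W\<rparr>"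
    have "Sobj \<sigma> X A L p2 \<le> Sobj \<sigma> X A L p1"
    proof (rule agree_le[OF L l1])
      show "agree l p1 p2" unfolding agree_def p2_def using True by simp
      show "resid \<sigma> X p2 l + lam \<sigma> X L p1 l * (Wnorm L p2 l)\<^sup>2 \<le> resid \<sigma> X p1 l + lam \<sigma> X L p1 l * (Wnorm L p1 l)\<^sup>2"
        using W[unfolded is_ls_def, rule_format, of "W1 p1"] True
        by (simp add: p2_def resid_def Wnorm_def)
    qed
    moreover have "Sobj \<sigma> X A L q \<le> Sobj \<sigma> X A L p2"
    proof (rule agree_le[OF L l1])
      show "agree l p2 q" unfolding agree_def p2_def qd using True by simp
      have "Wnorm L q l = Wnorm L p2 l" using True by (simp add: qd p2_def Wnorm_def)
      moreover have "resid \<sigma> X q l \<le> resid \<sigma> X p2 l"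
        using True colmean_le[of "W ** X" "cc p1 1" "bb p1 1"] by (simp add: qd p2_def resid_def)
      moreover have "lam \<sigma> X L p2 l = lam \<sigma> X L p1 l"
        using agree_S[OF L l1, of p1 p2] by (simp add: True p2_def lam_def resid_def Wnorm_def)
      ultimately show "resid \<sigma> X q l + lam \<sigma> X L p2 l * (Wnorm L q l)\<^sup>2 \<le> resid \<sigma> X p2 l + lam \<sigma> X L p2 l * (Wnorm L p2 l)\<^sup>2"
        by simp
    qed
    ultimately show ?thesis using S1 by linarith
  next
    case False
    then obtain W where W: "is_ls W (act \<sigma> (cc p1 (l - 1))) (cc p1 l - bias1 (bb p1 l)) (lam \<sigma> X L p1 l)"
      and qd: "q = p1\<lparr>Wm := (Wm p1)(l := W),
                       bb := (bb p1)(l := colmean (cc p1 l - W ** act \<sigma> (cc p1 (l - 1))))\<rparr>" using q' by blast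
    define p2 where "p2 = p1\<lparr>Wm := (Wm p1)(l := W)\<rparr>"
    have lL: "l \<noteq> L" using l1 L by auto
    have "Sobj \<sigma> X A L p2 \<le> Sobj \<sigma> X A L p1"
    proof (rule agree_le[OF L l1])
      show "agree l p1 p2" unfolding agree_def p2_def using False by simp
      show "resid \<sigma> X p2 l + lam \<sigma> X L p1 l * (Wnorm L p2 l)\<^sup>2 \<le> resid \<sigma> X p1 l + lam \<sigma> X L p1 l * (Wnorm L p1 l)\<^sup>2"
        using W[unfolded is_ls_def, rule_format, of "Wm p1 l"] False lL
        by (simp add: p2_def resid_def Wnorm_def)
    qed
    moreover have "Sobj \<sigma> X A L q \<le> Sobj \<sigma> X A L p2"
    proof (rule agree_le[OF L l1])
      show "agree l p2 q" unfolding agree_def p2_def qd using False by simp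
      have "Wnorm L q l = Wnorm L p2 l" using False by (simp add: qd p2_def Wnorm_def)
      moreover have "resid \<sigma> X q l \<le> resid \<sigma> X p2 l"
        using False colmean_le[of "W ** act \<sigma> (cc p1 (l - 1))" "cc p1 l" "bb p1 l"] by (simp add: qd p2_def resid_def)
      ultimately show "resid \<sigma> X q l + lam \<sigma> X L p2 l * (Wnorm L q l)\<^sup>2 \<le> resid \<sigma> X p2 l + lam \<sigma> X L p2 l * (Wnorm L p2 l)\<^sup>2"
        by simp
    qed
    ultimately show ?thesis using S1 by linarith
  qed
qed

lemma WL_dec:
  assumes d1: "\<And>x. (\<sigma> has_real_derivative \<sigma>' x) (at x)"
    and C: "C > 0" and t: "0 < \<tau>" "\<tau> \<le> 2 / C"
    and lip: "lipschitz_on C (cball 0 R) (\<lambda>w. grad (\<lambda>u. Sobj \<sigma> X A L (p\<lparr>WL := u\<rparr>)) w)"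
    and n0: "norm (WL p) \<le> R" and n1: "norm (WL (WL_step \<sigma> X A L \<tau> p)) \<le> R"
  shows "Sobj \<sigma> X A L (WL_step \<sigma> X A L \<tau> p) \<le> Sobj \<sigma> X A L p"
proof -
  define f where "f = (\<lambda>u. Sobj \<sigma> X A L (p\<lparr>WL := u\<rparr>))"
  have "f (WL p - \<tau> *\<^sub>R grad f (WL p)) \<le> f (WL p)"
  proof (rule descent_step[where S="cball 0 R" and C=C])
    show "GDERIV f z :> grad f z" for z unfolding f_def by (rule grad_works[OF diff_S_WL[OF d1]])
    show "lipschitz_on C (cball 0 R) (grad f)" using lip unfolding f_def by simp
    show "WL p - \<tau> *\<^sub>R grad f (WL p) \<in> cball 0 R" using n1 by (simp add: WL_step_def f_def)
  qed (use C t n0 in auto)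
  then show ?thesis by (simp add: f_def WL_step_def)
qed


theorem theorem3p4:
  fixes \<sigma> \<sigma>' \<sigma>'' :: "real \<Rightarrow> real"
    and X :: "real^'n::finite^'d::finite"
    and A :: "real^'n^'j::finite"
    and L :: nat
    and M0 M1 M2 R :: real
    and C :: "nat \<Rightarrow> real"
    and \<tau> :: "nat \<Rightarrow> nat \<Rightarrow> real"
    and st :: "nat \<Rightarrow> nat \<Rightarrow> ('d,'n,'m::finite,'j) params"
  assumes L2: "L \<ge> 2"
    and J2: "CARD('j) \<ge> 2"
    and A_onehot: "onehot_cols A"
    and d1: "\<And>x. (\<sigma> has_real_derivative \<sigma>' x) (at x)"
    and d2: "\<And>x. (\<sigma>' has_real_derivative \<sigma>'' x) (at x)"
    and d2_cont: "continuous_on UNIV \<sigma>''"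
    and M_pos: "M0 > 0" "M1 > 0" "M2 > 0"
    and bnd0: "\<And>x. \<bar>\<sigma> x\<bar> \<le> M0"
    and bnd1: "\<And>x. \<bar>\<sigma>' x\<bar> \<le> M1"
    and bnd2: "\<And>x. \<bar>\<sigma>'' x\<bar> \<le> M2"
    and R_pos: "R > 0"
    and C_pos: "\<And>l. l \<in> {1..L} \<Longrightarrow> C l > 0"
    and tau: "\<And>l k. l \<in> {1..L} \<Longrightarrow> 0 < \<tau> l k \<and> \<tau> l k \<le> 2 / C l"
    \<comment> \<open>st k 0 = Theta^k; st k 1 = after the W_L update; st k (L - l + 1) = after layer l.\<close>
    and run_next: "\<And>k. st (Suc k) 0 = st k L"
    and run_WL: "\<And>k. st k 1 = WL_step \<sigma> X A L (\<tau> L k) (st k 0)"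
    and run_layer: "\<And>k l. l \<in> {1..L-1} \<Longrightarrow>
                      layer_step \<sigma> X A L l (\<tau> l k) (st k (L - l)) (st k (L - l + 1))"
    and norm_W1: "\<And>k. norm (W1 (st k 0)) \<le> R"
    and norm_Wm: "\<And>k l. l \<in> {2..L-1} \<Longrightarrow> norm (Wm (st k 0) l) \<le> R"
    and norm_WL: "\<And>k. norm (WL (st k 0)) \<le> R"
    and norm_b: "\<And>k l. l \<in> {1..L-1} \<Longrightarrow> norm (bb (st k 0) l) \<le> R"
    and norm_c: "\<And>k l. l \<in> {1..L-1} \<Longrightarrow> norm (cc (st k 0) l) \<le> R"
    and lip_c: "\<And>k l. l \<in> {1..L-1} \<Longrightarrow>
                  lipschitz_on (C l) UNIV
                    (\<lambda>v. grad (\<lambda>u. Sobj \<sigma> X A L ((st k (L - l))\<lparr>cc := (cc (st k (L - l)))(l := u)\<rparr>)) v)"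
    and lip_WL: "\<And>k. lipschitz_on (C L) (cball 0 R)
                    (\<lambda>w. grad (\<lambda>u. Sobj \<sigma> X A L ((st k 0)\<lparr>WL := u\<rparr>)) w)"
  shows "\<forall>k. Sobj \<sigma> X A L (st (Suc k) 0) \<le> Sobj \<sigma> X A L (st k 0)"
  proof (intro allI)
  fix k
  have WLi: "WL (st k i) = WL (st k 1)" if "1 \<le> i" "i \<le> L" for i
    using that
  proof (induction i rule: dec_induct)
    case base then show ?case by simp
  next
    case (step n)
    have l: "L - n \<in> {1..L-1}" using step by auto
    have e: "L - (L - n) = n" using step by auto
    have "layer_step \<sigma> X A L (L - n) (\<tau> (L - n) k) (st k n) (st k (Suc n))"
      using run_layer[OF l, of k] by (simp add: e)
    then have "WL (st k (Suc n)) = WL (st k n)" by (rule layer_WL)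
    then show ?case using step by simp
  qed
  have dec: "Sobj \<sigma> X A L (st k i) \<le> Sobj \<sigma> X A L (st k 0)" if "i \<le> L" for i
    using that
  proof (induction i)
    case 0 then show ?case by simp
  next
    case (Suc n)
    show ?case
    proof (cases "n = 0")
      case True
      have CL: "C L > 0" using C_pos L2 by auto
      have tL: "0 < \<tau> L k" "\<tau> L k \<le> 2 / C L" using tau[of L k] L2 by auto
      have "norm (WL (st k 1)) \<le> R"
        using WLi[of L] L2 norm_WL[of "Suc k"] run_next[of k] by simp
      then have "Sobj \<sigma> X A L (st k 1) \<le> Sobj \<sigma> X A L (st k 0)"
        unfolding run_WL
        by (rule WL_dec[OF d1 CL tL lip_WL norm_WL])
      then show ?thesis using True by simp
    next
      case False
      have l: "L - n \<in> {1..L-1}" using Suc False by auto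
      have e: "L - (L - n) = n" using Suc by auto
      have Cl: "C (L - n) > 0" using C_pos l by auto
      have tl: "0 < \<tau> (L - n) k" "\<tau> (L - n) k \<le> 2 / C (L - n)" using tau[of "L - n" k] l by auto
      have st: "layer_step \<sigma> X A L (L - n) (\<tau> (L - n) k) (st k n) (st k (Suc n))"
        using run_layer[OF l, of k] by (simp add: e)
      have "Sobj \<sigma> X A L (st k (Suc n)) \<le> Sobj \<sigma> X A L (st k n)"
        by (rule layer_dec[OF d1 L2 l Cl tl _ st]) (use lip_c[OF l, of k] e in simp)
      then show ?thesis using Suc by simp
    qed
  qed
  show "Sobj \<sigma> X A L (st (Suc k) 0) \<le> Sobj \<sigma> X A L (st k 0)"
    using dec[of L] run_next[of k] by simp
qed

end
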